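(* Let $V$ be a finite-dimensional real vector space with a linear action of the quaternion algebra $\mathbb H$, and $\Lambda\subset V$ a lattice of maximal rank. Then for all complex structures $L\in\mathbb H$ (i.e. $L^2=-1$) except for at most countably many, the following holds: every rational $L$-invariant subspace $W\subset V$ is $\mathbb H$-invariant.
   Context: A real subspace $W\subset V$ is rational if $\Lambda\cap W$ is a lattice of maximal rank in $W$. The elements $L\in\mathbb H$ with $L^2=-1$ are $L=aI+bJ+cK$ with $a^2+b^2+c^2=1$. *)

theory Defs
  imports "HOL-Analysis.Analysis"
begin

definition full_lattice :: "'v::euclidean_space set \<Rightarrow> 'v set \<Rightarrow> bool" where
  "full_lattice W \<Gamma> \<longleftrightarrow>
     (\<exists>B. finite B \<and> independent B \<and> span B = W \<and>
          \<Gamma> = {(\<Sum>b\<in>B. c b *\<^sub>R b) | c. \<forall>b\<in>B. c b \<in> \<int>})"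

definition rational_subspace :: "'v::euclidean_space set \<Rightarrow> 'v set \<Rightarrow> bool" where
  "rational_subspace \<Lambda> W \<longleftrightarrow> subspace W \<and> full_lattice W (\<Lambda> \<inter> W)"

text \<open>A linear action of the quaternions on V, given by the images I, J, K of
  the standard units, subject to Hamilton's relations.\<close>
definition quaternion_action :: "('v::euclidean_space \<Rightarrow> 'v) \<Rightarrow> ('v \<Rightarrow> 'v) \<Rightarrow> ('v \<Rightarrow> 'v) \<Rightarrow> bool" where
  "quaternion_action I J K \<longleftrightarrow> linear I \<and> linear J \<and> linear K \<and>
     (\<forall>v. I (I v) = - v) \<and> (\<forall>v. J (J v) = - v) \<and> (\<forall>v. K (K v) = - v) \<and>
     (\<forall>v. I (J (K v)) = - v)"

end

theory Submission
  imports Defs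
begin


definition Q :: "('v::euclidean_space \<Rightarrow> 'v) \<Rightarrow> ('v \<Rightarrow> 'v) \<Rightarrow> ('v \<Rightarrow> 'v) \<Rightarrow> real \<Rightarrow> real \<Rightarrow> real \<Rightarrow> 'v \<Rightarrow> 'v"
  where "Q I J K a b c x = a *\<^sub>R I x + b *\<^sub>R J x + c *\<^sub>R K x"

lemma qtable:
  assumes "quaternion_action I J K"
  shows "I (J x) = K x" "J (I x) = - K x" "J (K x) = I x" "K (J x) = - I x"
        "K (I x) = J x" "I (K x) = - J x" "I (I x) = - x" "J (J x) = - x" "K (K x) = - x"
proof -
  have lI: "linear I" and lJ: "linear J" and lK: "linear K"
    and II: "\<And>v. I (I v) = - v" and JJ: "\<And>v. J (J v) = - v" and KK: "\<And>v. K (K v) = - v"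
    and IJK: "\<And>v. I (J (K v)) = - v"
    using assms unfolding quaternion_action_def by auto
  have nI: "\<And>y. I (- y) = - I y" using lI by (simp add: linear_neg)
  have nJ: "\<And>y. J (- y) = - J y" using lJ by (simp add: linear_neg)
  have nK: "\<And>y. K (- y) = - K y" using lK by (simp add: linear_neg)
  have IJ: "\<And>x. I (J x) = K x"
  proof -
    fix x have "I (J (K (K x))) = - K x" by (rule IJK)
    then show "I (J x) = K x" by (simp add: KK nI nJ)
  qed
  have IK: "\<And>x. I (K x) = - J x" by (metis IJ II)
  have KJ: "\<And>x. K (J x) = - I x" by (metis IJ JJ nI)
  have JIJ: "\<And>x. J (I (J x)) = I x"
  proof -
    fix x
    have "I (J (I (J x))) = - x" using KK IJ by metis
    then have "I (I (J (I (J x)))) = I (- x)" by simp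
    then show "J (I (J x)) = I x" by (simp add: II nI)
  qed
  have JI: "\<And>y. J (I y) = - K y"
  proof -
    fix y have "J (I (J (J y))) = I (J y)" by (rule JIJ)
    then have "- J (I y) = K y" by (simp add: JJ nI nJ IJ)
    then show "J (I y) = - K y" by (metis minus_minus)
  qed
  have JK: "\<And>x. J (K x) = I x" by (metis IJ JI KJ neg_equal_iff_equal JJ nJ)
  have KI: "\<And>x. K (I x) = J x"
  proof -
    fix x have "K (I x) = I (J (I x))" by (simp add: IJ)
    also have "\<dots> = - I (K x)" by (simp add: JI nI)
    finally show "K (I x) = J x" by (simp add: IK)
  qed
  show "I (J x) = K x" "J (I x) = - K x" "J (K x) = I x" "K (J x) = - I x"
        "K (I x) = J x" "I (K x) = - J x" "I (I x) = - x" "J (J x) = - x" "K (K x) = - x"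
    using IJ JI JK KJ KI IK II JJ KK by auto
qed

lemma Qprod:
  assumes "quaternion_action I J K"
  shows "Q I J K a b c (Q I J K d e f x) = (-(a*d+b*e+c*f)) *\<^sub>R x
     + (b*f - c*e) *\<^sub>R I x + (c*d - a*f) *\<^sub>R J x + (a*e - b*d) *\<^sub>R K x"
proof -
  have lI: "linear I" and lJ: "linear J" and lK: "linear K"
    using assms unfolding quaternion_action_def by auto
  show ?thesis
    unfolding Q_def
    by (simp add: linear_add[OF lI] linear_add[OF lJ] linear_add[OF lK]
        linear_scale[OF lI] linear_scale[OF lJ] linear_scale[OF lK] qtable[OF assms] algebra_simps)
qed

lemma comb4: fixes x X Y Z :: "'a::real_vector" shows "((p0::real) *\<^sub>R x + p1 *\<^sub>R X + p2 *\<^sub>R Y + p3 *\<^sub>R Z) - (q0 *\<^sub>R x + q1 *\<^sub>R X + q2 *\<^sub>R Y + q3 *\<^sub>R Z)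
  = (p0-q0) *\<^sub>R x + (p1-q1) *\<^sub>R X + (p2-q2) *\<^sub>R Y + (p3-q3) *\<^sub>R Z"
  by (simp add: scaleR_diff_left)

lemma Qcomm:
  assumes "quaternion_action I J K"
  shows "Q I J K a b c (Q I J K d e f x) - Q I J K d e f (Q I J K a b c x)
     = 2 *\<^sub>R Q I J K (b*f - c*e) (c*d - a*f) (a*e - b*d) x"
  unfolding Qprod[OF assms] comb4
  by (simp add: Q_def scaleR_add_right algebra_simps)


lemma comb3: fixes X Y Z :: "'a::real_vector"
  shows "al *\<^sub>R (u1 *\<^sub>R X + u2 *\<^sub>R Y + u3 *\<^sub>R Z) + bt *\<^sub>R (v1 *\<^sub>R X + v2 *\<^sub>R Y + v3 *\<^sub>R Z)
    + ga *\<^sub>R (w1 *\<^sub>R X + w2 *\<^sub>R Y + w3 *\<^sub>R Z)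
   = (al*u1+bt* v1+ga*w1) *\<^sub>R X + (al*u2+bt* v2+ga*w2) *\<^sub>R Y + (al*u3+bt* v3+ga*w3) *\<^sub>R Z"
  by (simp add: scaleR_add_right scaleR_add_left)

lemma inW3:
  assumes W: "subspace W" and x: "x \<in> W"
    and hu: "Q I J K u1 u2 u3 x \<in> W" and hv: "Q I J K v1 v2 v3 x \<in> W" and hw: "Q I J K w1 w2 w3 x \<in> W"
    and D: "u1*(v2*w3 - v3*w2) + u2*(v3*w1 - v1*w3) + u3*(v1*w2 - v2*w1) \<noteq> 0"
  shows "I x \<in> W \<and> J x \<in> W \<and> K x \<in> W"
proof -
  define D where "D = u1*(v2*w3 - v3*w2) + u2*(v3*w1 - v1*w3) + u3*(v1*w2 - v2*w1)"
  have D0: "D \<noteq> 0" using D D_def by simp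
  have gen: "(al*u1+bt* v1+ga*w1) *\<^sub>R I x + (al*u2+bt* v2+ga*w2) *\<^sub>R J x + (al*u3+bt* v3+ga*w3) *\<^sub>R K x \<in> W"
    for al bt ga
  proof -
    have "al *\<^sub>R Q I J K u1 u2 u3 x + bt *\<^sub>R Q I J K v1 v2 v3 x + ga *\<^sub>R Q I J K w1 w2 w3 x \<in> W"
      using W hu hv hw by (intro subspace_add subspace_mul) auto
    then show ?thesis unfolding Q_def comb3 .
  qed
  have "D *\<^sub>R I x \<in> W"
  proof -
    have "(v2*w3 - v3*w2)*u1 + (w2*u3 - w3*u2)* v1 + (u2* v3 - u3* v2)*w1 = D"
         "(v2*w3 - v3*w2)*u2 + (w2*u3 - w3*u2)* v2 + (u2* v3 - u3* v2)*w2 = 0"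
         "(v2*w3 - v3*w2)*u3 + (w2*u3 - w3*u2)* v3 + (u2* v3 - u3* v2)*w3 = 0"
      unfolding D_def by algebra+
    then show ?thesis using gen[of "v2*w3 - v3*w2" "w2*u3 - w3*u2" "u2* v3 - u3* v2"] by simp
  qed
  moreover have "D *\<^sub>R J x \<in> W"
  proof -
    have "(v3*w1 - v1*w3)*u1 + (w3*u1 - w1*u3)* v1 + (u3* v1 - u1* v3)*w1 = 0"
         "(v3*w1 - v1*w3)*u2 + (w3*u1 - w1*u3)* v2 + (u3* v1 - u1* v3)*w2 = D"
         "(v3*w1 - v1*w3)*u3 + (w3*u1 - w1*u3)* v3 + (u3* v1 - u1* v3)*w3 = 0"
      unfolding D_def by algebra+
    then show ?thesis using gen[of "v3*w1 - v1*w3" "w3*u1 - w1*u3" "u3* v1 - u1* v3"] by simp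
  qed
  moreover have "D *\<^sub>R K x \<in> W"
  proof -
    have "(v1*w2 - v2*w1)*u1 + (w1*u2 - w2*u1)* v1 + (u1* v2 - u2* v1)*w1 = 0"
         "(v1*w2 - v2*w1)*u2 + (w1*u2 - w2*u1)* v2 + (u1* v2 - u2* v1)*w2 = 0"
         "(v1*w2 - v2*w1)*u3 + (w1*u2 - w2*u1)* v3 + (u1* v2 - u2* v1)*w3 = D"
      unfolding D_def by algebra+
    then show ?thesis using gen[of "v1*w2 - v2*w1" "w1*u2 - w2*u1" "u1* v2 - u2* v1"] by simp
  qed
  ultimately show ?thesis using D0 W
    by (metis subspace_mul scaleR_scaleR field_class.field_inverse scaleR_one mult.commute)
qed

lemma parallel:
  fixes u1 u2 u3 v1 v2 v3 :: real
  assumes nu: "u1^2+u2^2+u3^2 = 1" and nv: "v1^2+v2^2+v3^2 = 1"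
    and c1: "u2* v3 - u3* v2 = 0" and c2: "u3* v1 - u1* v3 = 0" and c3: "u1* v2 - u2* v1 = 0"
  shows "(v1,v2,v3) = (u1,u2,u3) \<or> (v1,v2,v3) = (-u1,-u2,-u3)"
proof -
  define s where "s = u1* v1+u2* v2+u3* v3"
  have "s^2 = (u1^2+u2^2+u3^2)*(v1^2+v2^2+v3^2) - ((u2* v3 - u3* v2)^2 + (u3* v1 - u1* v3)^2 + (u1* v2 - u2* v1)^2)"
    unfolding s_def by algebra
  then have s2: "s^2 = 1" using nu nv c1 c2 c3 by simp
  have "(v1 - s*u1)^2 + (v2 - s*u2)^2 + (v3 - s*u3)^2 = (v1^2+v2^2+v3^2) - 2 * s * s + s^2*(u1^2+u2^2+u3^2)"
    unfolding s_def by algebra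
  then have "(v1 - s*u1)^2 + (v2 - s*u2)^2 + (v3 - s*u3)^2 = 0" using nu nv s2 by (simp add: power2_eq_square)
  then have "v1 = s*u1" "v2 = s*u2" "v3 = s*u3" by (simp_all add: sum_squares_eq_zero_iff add_nonneg_eq_0_iff)
  moreover have "s = 1 \<or> s = -1" using s2 by (simp add: power2_eq_1_iff)
  ultimately show ?thesis by auto
qed


lemma key:
  assumes qa: "quaternion_action I J K" and W: "subspace W"
    and nu: "u1^2+u2^2+u3^2 = 1" and nv: "v1^2+v2^2+v3^2 = 1"
    and ne1: "(v1,v2,v3) \<noteq> (u1,u2,u3)" and ne2: "(v1,v2,v3) \<noteq> (-u1,-u2,-u3)"
    and hu: "\<forall>x\<in>W. Q I J K u1 u2 u3 x \<in> W" and hv: "\<forall>x\<in>W. Q I J K v1 v2 v3 x \<in> W"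
  shows "I ` W \<subseteq> W \<and> J ` W \<subseteq> W \<and> K ` W \<subseteq> W"
proof -
  define w1 where "w1 = u2* v3 - u3* v2"
  define w2 where "w2 = u3* v1 - u1* v3"
  define w3 where "w3 = u1* v2 - u2* v1"
  have hw: "Q I J K w1 w2 w3 x \<in> W" if x: "x \<in> W" for x
  proof -
    have "Q I J K u1 u2 u3 (Q I J K v1 v2 v3 x) - Q I J K v1 v2 v3 (Q I J K u1 u2 u3 x) \<in> W"
      using W x hu hv by (intro subspace_diff) auto
    then have "2 *\<^sub>R Q I J K w1 w2 w3 x \<in> W"
      unfolding Qcomm[OF qa] w1_def w2_def w3_def .
    then have "(1/2) *\<^sub>R (2 *\<^sub>R Q I J K w1 w2 w3 x) \<in> W"
      using W by (rule subspace_mul[rotated])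
    then show ?thesis by simp
  qed
  have D: "u1*(v2*w3 - v3*w2) + u2*(v3*w1 - v1*w3) + u3*(v1*w2 - v2*w1) \<noteq> 0"
  proof
    assume "u1*(v2*w3 - v3*w2) + u2*(v3*w1 - v1*w3) + u3*(v1*w2 - v2*w1) = 0"
    moreover have "u1*(v2*w3 - v3*w2) + u2*(v3*w1 - v1*w3) + u3*(v1*w2 - v2*w1) = w1^2+w2^2+w3^2"
      unfolding w1_def w2_def w3_def by algebra
    ultimately have "w1^2+w2^2+w3^2 = 0" by simp
    then have "w1 = 0" "w2 = 0" "w3 = 0" by (simp_all add: sum_squares_eq_zero_iff add_nonneg_eq_0_iff)
    then show False using parallel[OF nu nv] ne1 ne2 unfolding w1_def w2_def w3_def by blast
  qed
  show ?thesis using inW3[OF W _ _ _ hw D] hu hv by blast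
qed

lemma lattice_countable:
  assumes "full_lattice UNIV \<Lambda>"
  shows "countable \<Lambda>"
proof -
  obtain B where B: "finite B" and L: "\<Lambda> = {(\<Sum>b\<in>B. c b *\<^sub>R b) | c. \<forall>b\<in>B. c b \<in> \<int>}"
    using assms unfolding full_lattice_def by blast
  have "\<Lambda> \<subseteq> (\<lambda>c. \<Sum>b\<in>B. c b *\<^sub>R b) ` (PiE B (\<lambda>_. \<int>))"
  proof
    fix x assume "x \<in> \<Lambda>"
    then obtain c where c: "\<forall>b\<in>B. c b \<in> \<int>" and x: "x = (\<Sum>b\<in>B. c b *\<^sub>R b)" using L by blast
    have "restrict c B \<in> PiE B (\<lambda>_. \<int>)" using c by auto
    moreover have "x = (\<Sum>b\<in>B. restrict c B b *\<^sub>R b)" using x by (auto intro: sum.cong)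
    ultimately show "x \<in> (\<lambda>c. \<Sum>b\<in>B. c b *\<^sub>R b) ` (PiE B (\<lambda>_. \<int>))" by blast
  qed
  moreover have "countable (PiE B (\<lambda>_. \<int>::real set))"
    using B countable_int by (intro countable_PiE) auto
  ultimately show ?thesis by (meson countable_image countable_subset)
qed

lemma rational_span:
  assumes "rational_subspace \<Lambda> W"
  shows "W \<in> span ` {B. finite B \<and> B \<subseteq> \<Lambda>}"
proof -
  obtain B where B: "finite B" "span B = W" and L: "\<Lambda> \<inter> W = {(\<Sum>b\<in>B. c b *\<^sub>R b) | c. \<forall>b\<in>B. c b \<in> \<int>}"
    using assms unfolding rational_subspace_def full_lattice_def by blast
  have "B \<subseteq> \<Lambda>"
  proof
    fix b assume b: "b \<in> B"
    have "(\<Sum>b'\<in>B. (if b' = b then 1 else 0) *\<^sub>R b') = (\<Sum>b'\<in>B. (if b' = b then b' else 0))"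
      by (intro sum.cong) auto
    also have "\<dots> = b" using B(1) b by simp
    finally have "b \<in> \<Lambda> \<inter> W" unfolding L
      by (intro CollectI exI[of _ "\<lambda>b'. if b' = b then 1 else 0"]) auto
    then show "b \<in> \<Lambda>" by blast
  qed
  then show ?thesis using B by blast
qed


theorem lemma3p3:
  fixes I J K :: "'v::euclidean_space \<Rightarrow> 'v" and \<Lambda> :: "'v set"
  assumes "quaternion_action I J K"
    and "full_lattice UNIV \<Lambda>"
  shows "\<exists>E :: (real \<times> real \<times> real) set. countable E \<and>
           (\<forall>a b c. a\<^sup>2 + b\<^sup>2 + c\<^sup>2 = 1 \<and> (a, b, c) \<notin> E \<longrightarrow>
              (\<forall>W. rational_subspace \<Lambda> W \<and>
                   (\<lambda>v. a *\<^sub>R I v + b *\<^sub>R J v + c *\<^sub>R K v) ` W \<subseteq> W \<longrightarrow>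
                   I ` W \<subseteq> W \<and> J ` W \<subseteq> W \<and> K ` W \<subseteq> W))"
proof -
  note qa = assms(1)
  define R where "R = {W. rational_subspace \<Lambda> W \<and> \<not> (I ` W \<subseteq> W \<and> J ` W \<subseteq> W \<and> K ` W \<subseteq> W)}"
  define S where "S W = {(a,b,c). a\<^sup>2 + b\<^sup>2 + c\<^sup>2 = 1 \<and>
                   (\<lambda>v. a *\<^sub>R I v + b *\<^sub>R J v + c *\<^sub>R K v) ` W \<subseteq> W}" for W
  define E where "E = (\<Union>W\<in>R. S W)"
  have cR: "countable R"
  proof -
    have "R \<subseteq> span ` {B. finite B \<and> B \<subseteq> \<Lambda>}" unfolding R_def using rational_span by blast
    moreover have "countable {B. finite B \<and> B \<subseteq> \<Lambda>}"
      using lattice_countable[OF assms(2)] by (rule countable_Collect_finite_subset)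
    ultimately show ?thesis by (meson countable_image countable_subset)
  qed
  have cS: "countable (S W)" if WR: "W \<in> R" for W
  proof (cases "S W = {}")
    case True then show ?thesis by simp
  next
    case False
    then obtain u1 u2 u3 where u: "(u1,u2,u3) \<in> S W" by auto
    have sub: "subspace W" using WR unfolding R_def rational_subspace_def by blast
    have "S W \<subseteq> {(u1,u2,u3), (-u1,-u2,-u3)}"
    proof
      fix p assume p: "p \<in> S W"
      obtain v1 v2 v3 where pv: "p = (v1,v2,v3)" by (cases p) auto
      show "p \<in> {(u1,u2,u3), (-u1,-u2,-u3)}"
      proof (rule ccontr)
        assume "p \<notin> {(u1,u2,u3), (-u1,-u2,-u3)}"
        then have ne1: "(v1,v2,v3) \<noteq> (u1,u2,u3)" and ne2: "(v1,v2,v3) \<noteq> (-u1,-u2,-u3)" using pv by auto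
        have nu: "u1^2+u2^2+u3^2 = 1" and hu: "\<forall>x\<in>W. Q I J K u1 u2 u3 x \<in> W"
          using u unfolding S_def Q_def by auto
        have nv: "v1^2+v2^2+v3^2 = 1" and hv: "\<forall>x\<in>W. Q I J K v1 v2 v3 x \<in> W"
          using p pv unfolding S_def Q_def by auto
        have "I ` W \<subseteq> W \<and> J ` W \<subseteq> W \<and> K ` W \<subseteq> W"
          by (rule key[OF qa sub nu nv ne1 ne2 hu hv])
        then show False using WR unfolding R_def by blast
      qed
    qed
    then show ?thesis by (rule countable_subset) simp
  qed
  have "countable E" unfolding E_def using cR cS by (intro countable_UN) auto
  moreover have "\<forall>a b c. a\<^sup>2 + b\<^sup>2 + c\<^sup>2 = 1 \<and> (a, b, c) \<notin> E \<longrightarrow>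
              (\<forall>W. rational_subspace \<Lambda> W \<and>
                   (\<lambda>v. a *\<^sub>R I v + b *\<^sub>R J v + c *\<^sub>R K v) ` W \<subseteq> W \<longrightarrow>
                   I ` W \<subseteq> W \<and> J ` W \<subseteq> W \<and> K ` W \<subseteq> W)"
  proof (intro allI impI)
    fix a b c W
    assume h1: "a\<^sup>2 + b\<^sup>2 + c\<^sup>2 = 1 \<and> (a, b, c) \<notin> E"
      and h2: "rational_subspace \<Lambda> W \<and> (\<lambda>v. a *\<^sub>R I v + b *\<^sub>R J v + c *\<^sub>R K v) ` W \<subseteq> W"
    show "I ` W \<subseteq> W \<and> J ` W \<subseteq> W \<and> K ` W \<subseteq> W"
    proof (rule ccontr)
      assume "\<not> ?thesis"
      then have "W \<in> R" using h2 unfolding R_def by blast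
      moreover have "(a,b,c) \<in> S W" using h1 h2 unfolding S_def by blast
      ultimately show False using h1 unfolding E_def by blast
    qed
  qed
  ultimately show ?thesis by blast
qed

end
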